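(* For every positive integer $n$, $$\sum_{k=0}^{n-1}\frac{q^{-k(k-1)/2}}{\genfrac{[}{]}{0pt}{}{n}{k}_q}=\frac{(q^2;q)_n}{(q^2;q^2)_n}\sum_{i=0}^{n-1}\frac{C(i)\,(q^2;q^2)_i}{(q^2;q)_i\,(q^{i+2}-1)},$$ where $$C(i)=\frac{q^{i+1}+q^{3(i+1)}+q^{-i(i-1)/2}+q^{-(i+1)(i-4)/2}-q^{(2+3i-i^2)/2}-q^{-(i+1)(i-2)/2}-2q^{2(i+1)}}{q^{i+1}-1}.$$ (The identity is an identity of rational functions in the indeterminate $q$.)
   Context: For an indeterminate $q$ and any $a$, $(a;q)_n=(1-a)(1-aq)\cdots(1-aq^{n-1})$, with $(a;q)_0=1$. The $q$-binomial coefficient is $\genfrac{[}{]}{0pt}{}{n}{k}_q=\frac{(q;q)_n}{(q;q)_k\,(q;q)_{n-k}}$ for $0\le k\le n$. *)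

theory Defs
  imports Complex_Main
begin

definition qpoch :: "'a::field \<Rightarrow> 'a \<Rightarrow> nat \<Rightarrow> 'a" where
  "qpoch a q n = (\<Prod>j<n. (1 - a * q ^ j))"

definition qbinom :: "nat \<Rightarrow> nat \<Rightarrow> 'a::field \<Rightarrow> 'a" where
  "qbinom n k q = qpoch q q n / (qpoch q q k * qpoch q q (n - k))"

text \<open>The coefficient C(i); all exponents below are integers (the numerators are even).\<close>
definition Ccoef :: "'a::field \<Rightarrow> nat \<Rightarrow> 'a" where
  "Ccoef q i = (let j = int i in
     (q ^ (i + 1) + q ^ (3 * (i + 1))
      + q powi (- (j * (j - 1) div 2))
      + q powi (- ((j + 1) * (j - 4) div 2))
      - q powi ((2 + 3 * j - j ^ 2) div 2)
      - q powi (- ((j + 1) * (j - 2) div 2))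
      - 2 * q ^ (2 * (i + 1)))
     / (q ^ (i + 1) - 1))"

end

theory Submission
  imports Defs
begin

lemma e_Suc:
  assumes "(q::'a::field) \<noteq> 0"
  shows "q powi (- (int (Suc k) * (int (Suc k) - 1) div 2)) = q powi (- (int k * (int k - 1) div 2)) / q ^ k"
proof -
  have "int (Suc k) * (int (Suc k) - 1) = int k * (int k - 1) + int k * 2" by (simp add: algebra_simps)
  hence "- (int (Suc k) * (int (Suc k) - 1) div 2) = - (int k * (int k - 1) div 2) + (- int k)" by simp
  moreover have "q powi (a + (- int k)) = q powi a / q ^ k" for a
    using assms by (simp add: power_int_diff)
  ultimately show ?thesis by simp
qed

lemma qpoch_Suc: "qpoch a q (Suc n) = qpoch a q n * (1 - a * q ^ n)"
  by (simp add: qpoch_def)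

lemma qpoch0: "qpoch a q 0 = 1" by (simp add: qpoch_def)

definition ee :: "'a::field \<Rightarrow> nat \<Rightarrow> 'a" where "ee q k = q powi (- (int k * (int k - 1) div 2))"

definition uu :: "'a::field \<Rightarrow> nat \<Rightarrow> nat \<Rightarrow> 'a" where "uu q n k = ee q k / qbinom n k q"

lemma ee_Suc: "(q::'a::field) \<noteq> 0 \<Longrightarrow> ee q (Suc k) = ee q k / q ^ k"
  unfolding ee_def by (rule e_Suc)

locale qctx =
  fixes q :: "'a::field"
  assumes q0: "q \<noteq> 0" and qm: "\<forall>m::nat. m \<ge> 1 \<longrightarrow> q ^ m \<noteq> 1"
begin

lemma ne1: "m \<ge> 1 \<Longrightarrow> 1 - q ^ m \<noteq> 0" using qm by auto

lemma P_nz: "qpoch q q m \<noteq> 0"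
proof (induction m)
  case 0 then show ?case by (simp add: qpoch0)
next
  case (Suc m)
  have "1 - q * q ^ m \<noteq> 0" using ne1[of "Suc m"] by simp
  then show ?case using Suc by (simp add: qpoch_Suc)
qed

lemma B_nz: "qpoch (q^2) q m \<noteq> 0"
proof (induction m)
  case 0 then show ?case by (simp add: qpoch0)
next
  case (Suc m)
  have "q^(m+2) = q^2 * q ^ m" by (metis add.commute power_add)
  have "1 - q^(m+2) \<noteq> 0" by (rule ne1) simp
  hence "1 - q^2 * q ^ m \<noteq> 0" using \<open>q^(m+2) = q^2 * q ^ m\<close> by metis
  then show ?case using Suc by (simp add: qpoch_Suc)
qed

lemma D_nz: "qpoch (q^2) (q^2) m \<noteq> 0"
proof (induction m)
  case 0 then show ?case by (simp add: qpoch0)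
next
  case (Suc m)
  have "q^(2*m+2) = q^2 * (q^2) ^ m" by (metis add.commute power_add power_mult)
  have "1 - q^(2*m+2) \<noteq> 0" by (rule ne1) simp
  hence "1 - q^2 * (q^2) ^ m \<noteq> 0" using \<open>q^(2*m+2) = q^2 * (q^2) ^ m\<close> by metis
  then show ?case using Suc by (simp add: qpoch_Suc)
qed

lemma u_alt: "k \<le> n \<Longrightarrow> uu q n k = ee q k * qpoch q q k * qpoch q q (n - k) / qpoch q q n"
  using P_nz by (simp add: uu_def qbinom_def field_simps)

lemma u_rec:
  assumes "k \<le> n"
  shows "uu q (Suc n) k + q ^ (Suc n) * uu q (Suc n) (Suc k) = uu q n k * (1 - q^(n+2)) / (1 - q^(n+1))"
proof -
  obtain m where n: "n = m + k" using assms le_iff_add by (metis add.commute)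
  have a1: "uu q (Suc n) k = ee q k * qpoch q q k * (qpoch q q m * (1 - q * q^m)) / (qpoch q q n * (1 - q * q^n))"
    using u_alt[of k "Suc n"] assms n by (simp add: qpoch_Suc Suc_diff_le)
  have a2: "uu q (Suc n) (Suc k) = ee q k / q^k * (qpoch q q k * (1 - q * q^k)) * qpoch q q m / (qpoch q q n * (1 - q * q^n))"
    using u_alt[of "Suc k" "Suc n"] assms n by (simp add: qpoch_Suc ee_Suc[OF q0])
  have a3: "uu q n k = ee q k * qpoch q q k * qpoch q q m / qpoch q q n"
    using u_alt[of k n] assms n by simp
  have nz: "1 - q * (q^m * q^k) \<noteq> 0" using ne1[of "m+k+1"] by (simp add: power_add mult.commute mult.left_commute)
  have nz2: "1 - q * q * (q^m * q^k) \<noteq> 0" using ne1[of "m+k+2"] by (simp add: power_add mult_ac power2_eq_square)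
  have nzk: "q^k \<noteq> 0" using q0 by simp
  have gen0: "E * (X * (1 - q * a)) / (Dn * c) + q * (a * b) * (E / b * (X * (1 - q * b)) / (Dn * c))
     = E * X / Dn * ((1 - q * a) + q * a * (1 - q * b)) / c"
    if "b \<noteq> 0" "c \<noteq> 0" "Dn \<noteq> 0" for E X a b Dn c
    using that by (simp add: field_simps)
  have gen: "E * (X * (1 - q * a)) / (Dn * (1 - q * (a * b))) + q * (a * b) * (E / b * (X * (1 - q * b)) / (Dn * (1 - q * (a * b))))
     = E * X / Dn * (1 - q * q * (a * b)) / (1 - q * (a * b))"
    if "b \<noteq> 0" "1 - q * (a * b) \<noteq> 0" "Dn \<noteq> 0" for E X a b Dn
  proof -
    have "(1 - q * a) + q * a * (1 - q * b) = 1 - q * q * (a * b)" by (simp add: algebra_simps)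
    then show ?thesis using gen0[OF that(1,2,3), of E X] by simp
  qed
  have pn: "q^n = q^m * q^k" "q^(Suc n) = q * (q^m * q^k)" "q^(n+2) = q * q * (q^m * q^k)" "q^(n+1) = q * (q^m * q^k)"
    by (simp_all add: n power_add mult_ac power2_eq_square)
  show ?thesis
    unfolding a1 a2 a3 pn
    using gen[of "q^k" "q^m" "qpoch q q n" "ee q k" "qpoch q q k * qpoch q q m"] nzk nz P_nz[of n]
    by (simp add: mult_ac)
qed


definition SS :: "nat \<Rightarrow> 'a" where "SS n = (\<Sum>k<n. uu q n k)"

lemma uu_diag: "uu q m m = ee q m"
  using P_nz[of m] by (simp add: uu_def qbinom_def qpoch0)

lemma uu_0: "uu q m 0 = 1"
  using P_nz[of m] by (simp add: uu_def qbinom_def qpoch0 ee_def)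

lemma S_rec: "SS (Suc n) + q^(Suc n) * (SS (Suc n) + ee q (Suc n) - 1) = (SS n + ee q n) * (1-q^(n+2))/(1-q^(n+1))"
proof -
  have "(\<Sum>k\<le>n. uu q (Suc n) k + q ^ (Suc n) * uu q (Suc n) (Suc k)) = (\<Sum>k\<le>n. uu q n k * (1 - q^(n+2)) / (1 - q^(n+1)))"
    by (rule sum.cong[OF refl], rule u_rec) simp
  also have "\<dots> = (\<Sum>k\<le>n. uu q n k) * (1 - q^(n+2)) / (1 - q^(n+1))"
    by (simp add: sum_distrib_right sum_divide_distrib)
  also have "(\<Sum>k\<le>n. uu q n k) = SS n + ee q n"
    by (simp add: SS_def lessThan_Suc_atMost[symmetric] uu_diag)
  finally have h: "(\<Sum>k\<le>n. uu q (Suc n) k) + q ^ (Suc n) * (\<Sum>k\<le>n. uu q (Suc n) (Suc k)) = (SS n + ee q n) * (1 - q^(n+2)) / (1 - q^(n+1))"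
    by (simp add: sum.distrib sum_distrib_left)
  have h1: "(\<Sum>k\<le>n. uu q (Suc n) k) = SS (Suc n)"
    by (simp add: SS_def lessThan_Suc_atMost)
  have "(\<Sum>k\<le>Suc n. uu q (Suc n) k) = uu q (Suc n) 0 + (\<Sum>k\<le>n. uu q (Suc n) (Suc k))"
    by (rule sum.atMost_Suc_shift)
  moreover have "(\<Sum>k\<le>Suc n. uu q (Suc n) k) = SS (Suc n) + ee q (Suc n)"
    by (simp only: sum.atMost_Suc h1 uu_diag)
  ultimately have h2: "(\<Sum>k\<le>n. uu q (Suc n) (Suc k)) = SS (Suc n) + ee q (Suc n) - 1"
    by (simp add: uu_0 algebra_simps)
  show ?thesis using h unfolding h1 h2 .
qed

lemma int_lem:
  fixes j :: int
  shows "- ((j + 1) * (j - 4) div 2) = - (j * (j - 1) div 2) + 2 + j"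
    and "(2 + 3 * j - j ^ 2) div 2 = - (j * (j - 1) div 2) + 1 + j"
    and "- ((j + 1) * (j - 2) div 2) = - (j * (j - 1) div 2) + 1"
proof -
  have "(j + 1) * (j - 4) = j * (j - 1) + (- 2 - j) * 2" by (simp add: algebra_simps)
  then show "- ((j + 1) * (j - 4) div 2) = - (j * (j - 1) div 2) + 2 + j" by simp
  have "even (j * (j - 1))" by simp
  then obtain c where c: "j * (j - 1) = 2 * c" unfolding dvd_def by blast
  have "2 + 3 * j - j ^ 2 = - (j * (j - 1)) + (1 + j) * 2" by (simp add: algebra_simps power2_eq_square)
  also have "\<dots> = (- c + 1 + j) * 2" using c by simp
  finally show "(2 + 3 * j - j ^ 2) div 2 = - (j * (j - 1) div 2) + 1 + j" using c by simp
  have "(j + 1) * (j - 2) = j * (j - 1) + (- 1) * 2" by (simp add: algebra_simps)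
  then show "- ((j + 1) * (j - 2) div 2) = - (j * (j - 1) div 2) + 1" by simp
qed

lemma Ccoef_alt:
  "Ccoef q n = (q * q^n + q^3 * (q^n)^3 + ee q n + ee q n * q^2 * q^n - ee q n * q * q^n - ee q n * q
     - 2 * q^2 * (q^n)^2) / (q * q^n - 1)"
proof -
  have pw: "q powi (a + 2 + int n) = q powi a * q^2 * q^n" "q powi (a + 1 + int n) = q powi a * q * q^n"
     "q powi (a + 1) = q powi a * q" for a
    using q0 by (simp_all add: power_int_add)
  have pw2: "q^(n+1) = q * q^n" "q^(3*(n+1)) = q^3 * (q^n)^3" "q^(2*(n+1)) = q^2 * (q^n)^2"
    unfolding power_mult[symmetric] power_add[symmetric]
    by (simp_all add: algebra_simps)
  show ?thesis
    unfolding Ccoef_def Let_def int_lem pw ee_def pw2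
    by (simp add: mult_ac)
qed

lemma key:
  assumes x0: "x \<noteq> 0" and n1: "1 - q*x \<noteq> 0" and n2: "1 - q*q*x \<noteq> 0" and n3: "1 + q*x \<noteq> 0"
  and hyp: "T + q*x * (T + p/x - 1) = (S + p) * (1 - q*q*x) / (1 - q*x)"
  shows "(1 - q*q*(x*x)) / (1 - q*q*x) * T - S =
     ((q * x + q^3 * x^3 + p + p * q^2 * x - p * q * x - p * q - 2 * q^2 * x^2) / (q * x - 1)) / (q*q*x - 1)"
proof -
  have Tm: "T * (1 + q*x) = (S + p) * (1 - q*q*x) / (1 - q*x) - q * p + q * x"
    using hyp x0 by (simp add: algebra_simps)
  have n1': "q * x - 1 \<noteq> 0" using n1 by (simp add: algebra_simps)
  have n2': "q * q * x - 1 \<noteq> 0" using n2 by (simp add: algebra_simps)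
  have "(1 - q*q*(x*x)) / (1 - q*q*x) * T = (1 - q*x) / (1 - q*q*x) * (T * (1 + q*x))"
    by (simp add: algebra_simps)
  also have "\<dots> = (1 - q*x) / (1 - q*q*x) * ((S + p) * (1 - q*q*x) / (1 - q*x) - q * p + q * x)"
    using Tm by simp
  also have "\<dots> = (1 - q*x) / (1 - q*q*x) * ((S + p) * (1 - q*q*x) / (1 - q*x)) - (1 - q*x) * (q*p - q*x) / (1 - q*q*x)"
    by (simp add: algebra_simps diff_divide_distrib add_divide_distrib)
  also have "(1 - q*x) / (1 - q*q*x) * ((S + p) * (1 - q*q*x) / (1 - q*x)) = S + p"
    using n1 n2 by simp
  finally have L: "(1 - q*q*(x*x)) / (1 - q*q*x) * T - S = p - (1 - q*x) * (q*p - q*x) / (1 - q*q*x)"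
    by simp
  have gen: "P - B / d = N / c / (- d)" if "c \<noteq> 0" "d \<noteq> 0" "(P*d - B)*c + N = 0" for P B d N c :: 'a
  proof -
    have "P - B/d = (P*d - B)/d" using that(2) by (simp add: field_simps)
    also have "P*d - B = - N / c" using that(1,3) by (simp add: field_simps eq_neg_iff_add_eq_0 add.commute)
    finally show ?thesis by (simp add: divide_simps)
  qed
  have poly: "(p * (1 - q*q*x) - (1 - q*x) * (q*p - q*x)) * (q*x - 1)
     + (q * x + q^3 * x^3 + p + p * q^2 * x - p * q * x - p * q - 2 * q^2 * x^2) = 0"
    by (simp add: algebra_simps power2_eq_square power3_eq_cube)
  have "q*q*x - 1 = - (1 - q*q*x)" by simp
  then show ?thesis unfolding L using gen[OF n1' n2 poly] by simp
qed
lemma step: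
  "qpoch (q^2) (q^2) (Suc n) / qpoch (q^2) q (Suc n) * SS (Suc n)
   = qpoch (q^2) (q^2) n / qpoch (q^2) q n * SS n
     + Ccoef q n * qpoch (q^2) (q^2) n / (qpoch (q^2) q n * (q ^ (n + 2) - 1))"
proof -
  define x where "x = q^n"
  define p where "p = ee q n"
  have x0: "x \<noteq> 0" using q0 by (simp add: x_def)
  have e1: "q^(Suc n) = q*x" "q^(n+1) = q*x" "q^(n+2) = q*q*x" "q^2 * q^n = q*q*x" "q^2 * (q^2)^n = q*q*(x*x)"
    by (simp_all add: x_def power_add power2_eq_square power_mult_distrib mult_ac)
  have "1 - q^(n+1) \<noteq> 0" "1 - q^(n+2) \<noteq> 0" by (rule ne1, simp)+
  hence n1: "1 - q*x \<noteq> 0" and n2: "1 - q*q*x \<noteq> 0" by (metis e1(2), metis e1(3))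
  have "1 - q^(2*n+2) \<noteq> 0" by (rule ne1) simp
  moreover have "q^(2*n+2) = (q*x)*(q*x)" by (simp add: x_def power_add power_mult mult_ac power2_eq_square)
  moreover have "(1 - q*x) * (1 + q*x) = 1 - (q*x)*(q*x)" by (simp add: algebra_simps)
  ultimately have "(1 - q*x) * (1 + q*x) \<noteq> 0" by metis
  hence n3: "1 + q*x \<noteq> 0" by simp
  have hyp: "SS (Suc n) + q*x * (SS (Suc n) + p/x - 1) = (SS n + p) * (1 - q*q*x) / (1 - q*x)"
    using S_rec[of n] unfolding e1 ee_Suc[OF q0] p_def x_def .
  have K: "(1 - q*q*(x*x)) / (1 - q*q*x) * SS (Suc n) - SS n = Ccoef q n / (q*q*x - 1)"
    using key[OF x0 n1 n2 n3 hyp] unfolding Ccoef_alt p_def x_def .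
  have Bn: "qpoch (q^2) q n \<noteq> 0" and Dn: "qpoch (q^2) (q^2) n \<noteq> 0" using B_nz D_nz by auto
  have "qpoch (q^2) (q^2) (Suc n) / qpoch (q^2) q (Suc n) * SS (Suc n)
     = qpoch (q^2) (q^2) n / qpoch (q^2) q n * ((1 - q*q*(x*x)) / (1 - q*q*x) * SS (Suc n))"
    by (simp add: qpoch_Suc e1)
  also have "(1 - q*q*(x*x)) / (1 - q*q*x) * SS (Suc n) = SS n + Ccoef q n / (q*q*x - 1)"
    using K by (simp add: algebra_simps)
  finally have F: "qpoch (q^2) (q^2) (Suc n) / qpoch (q^2) q (Suc n) * SS (Suc n)
     = qpoch (q^2) (q^2) n / qpoch (q^2) q n * (SS n + Ccoef q n / (q*q*x - 1))" .
  have n2': "q*q*x - 1 \<noteq> 0" using n2 by (simp add: algebra_simps)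
  show ?thesis unfolding F e1(3) using Bn n2' by (simp add: field_simps)
qed

lemma claim: "qpoch (q^2) (q^2) n / qpoch (q^2) q n * SS n
   = (\<Sum>i<n. Ccoef q i * qpoch (q^2) (q^2) i / (qpoch (q^2) q i * (q ^ (i + 2) - 1)))"
proof (induction n)
  case 0 then show ?case by (simp add: SS_def)
next
  case (Suc n) show ?case unfolding sum.lessThan_Suc Suc.IH[symmetric] by (rule step)
qed

end

theorem theorem2:
  fixes q :: "'a::field" and n :: nat
  assumes "q \<noteq> 0" and "\<forall>m::nat. m \<ge> 1 \<longrightarrow> q ^ m \<noteq> 1" and "n \<ge> 1"
  shows "(\<Sum>k<n. q powi (- (int k * (int k - 1) div 2)) / qbinom n k q)
       = qpoch (q^2) q n / qpoch (q^2) (q^2) n *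
         (\<Sum>i<n. Ccoef q i * qpoch (q^2) (q^2) i / (qpoch (q^2) q i * (q ^ (i + 2) - 1)))"
proof -
  interpret qctx q using assms(1,2) by unfold_locales
  have L: "(\<Sum>k<n. q powi (- (int k * (int k - 1) div 2)) / qbinom n k q) = SS n"
    by (simp add: SS_def uu_def ee_def)
  show ?thesis unfolding L claim[symmetric] using B_nz[of n] D_nz[of n] by simp
qed

end
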